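(* Let $F\subsetneq K$ be fields of characteristic $0$, with $F$ a proper nonempty subfield of $K$. Let $p(x)=\sum_{k=0}^{n}a_k x^k\in K[x]$ be non-constant with $a_n\neq 0$, and let $q(x)=\sum_{j=0}^{m}b_j x^j\in K[x]$ with $b_m\neq 0$. Suppose $a_nb_m\in F$. Then $D_F(p\circ q)\geq D_F(q)$.
   Context: For sets $F\subset K$ and $p(x)=\sum_{k=0}^{n}a_kx^k\in K[x]$ with $a_n\neq 0$, the $F$ deficit $D_F(p)$ is defined as follows: if $p\in K[x]\setminus F[x]$, then $D_F(p)=n-\max\{0\le k\le n: a_k\notin F\}$; if $p\in F[x]$, then $D_F(p)=n$. Here $F[x]$ denotes the set of polynomials with all coefficients in $F$. *)

theory Defs
  imports "HOL-Computational_Algebra.Polynomial"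
begin

text \<open>A subfield F of the ambient field K (= the type 'a).\<close>
definition is_subfield :: "'a::field set \<Rightarrow> bool" where
  "is_subfield F \<longleftrightarrow> 0 \<in> F \<and> 1 \<in> F \<and>
     (\<forall>x\<in>F. \<forall>y\<in>F. x + y \<in> F) \<and> (\<forall>x\<in>F. - x \<in> F) \<and>
     (\<forall>x\<in>F. \<forall>y\<in>F. x * y \<in> F) \<and> (\<forall>x\<in>F. x \<noteq> 0 \<longrightarrow> inverse x \<in> F)"

definition deficit :: "'a::field set \<Rightarrow> 'a poly \<Rightarrow> nat" where
  "deficit F p =
     (if \<forall>k. coeff p k \<in> F then degree p
      else degree p - Max {k. k \<le> degree p \<and> coeff p k \<notin> F})"

end

theory Submission
  imports Defs
begin

definition inF :: "'a::field set \<Rightarrow> 'a poly \<Rightarrow> bool" where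
  "inF F h \<longleftrightarrow> (\<forall>k. coeff h k \<in> F)"

lemma sub_sum:
  assumes "is_subfield F" "\<And>i. i \<in> A \<Longrightarrow> f i \<in> F"
  shows "sum f A \<in> F"
  using assms(2)
proof (induction A rule: infinite_finite_induct)
  case (infinite A) then show ?case using assms(1) by (simp add: is_subfield_def)
next
  case empty then show ?case using assms(1) by (simp add: is_subfield_def)
next
  case (insert x A) then show ?case using assms(1) by (simp add: is_subfield_def)
qed

lemma inF_mult:
  assumes "is_subfield F" "inF F a" "inF F b"
  shows "inF F (a * b)"
  unfolding inF_def coeff_mult
proof
  fix k show "(\<Sum>i\<le>k. coeff a i * coeff b (k - i)) \<in> F"
    apply (rule sub_sum[OF assms(1)])
    using assms unfolding inF_def is_subfield_def by blast
qed

lemma inF_power: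
  assumes "is_subfield F" "inF F a"
  shows "inF F (a ^ n)"
proof (induction n)
  case 0 then show ?case using assms(1)
    by (auto simp: inF_def is_subfield_def coeff_1)
next
  case (Suc n) then show ?case using inF_mult[OF assms(1) assms(2)] by simp
qed

lemma pcompose_power': "pcompose (x ^ n) q = (pcompose x q) ^ n"
  for x q :: "'a::comm_semiring_1 poly"
  by (induction n) (simp_all add: pcompose_1 pcompose_mult)

lemma deficit_le: "deficit F q \<le> degree q"
  unfolding deficit_def by auto

lemma pow_diff_deg:
  fixes h r :: "'a::field poly"
  assumes "degree (h + r) = m" "degree h \<le> m" "degree r + d \<le> m"
  shows "degree ((h + r) ^ Suc n - h ^ Suc n) + d \<le> Suc n * m"
proof (induction n)
  case 0 then show ?case using assms by simp
next
  case (Suc n)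
  have eq: "(h + r) ^ Suc (Suc n) - h ^ Suc (Suc n)
     = (h + r) * ((h + r) ^ Suc n - h ^ Suc n) + r * h ^ Suc n"
    by (simp add: algebra_simps)
  have d1: "degree ((h + r) * ((h + r) ^ Suc n - h ^ Suc n)) + d \<le> Suc (Suc n) * m"
    using degree_mult_le[of "h + r" "(h + r) ^ Suc n - h ^ Suc n"] Suc assms(1) by simp
  have hp: "degree (h ^ Suc n) \<le> Suc n * m"
    using degree_power_le[of h "Suc n"] assms(2) by (metis le_trans mult_le_mono2 mult.commute)
  have d2: "degree (r * h ^ Suc n) + d \<le> Suc (Suc n) * m"
    using degree_mult_le[of r "h ^ Suc n"] hp assms(3) by simp
  have "degree ((h + r) ^ Suc (Suc n) - h ^ Suc (Suc n)) \<le> Suc (Suc n) * m - d"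
    unfolding eq by (rule degree_add_le) (use d1 d2 in linarith)+
  moreover have "d \<le> Suc (Suc n) * m" using d2 by linarith
  ultimately show ?case by linarith
qed

theorem theorem9:
  fixes F :: "'a::field_char_0 set" and p q :: "'a poly"
  assumes "is_subfield F" and "F \<noteq> UNIV"
    and "degree p \<ge> 1"
    and "q \<noteq> 0"
    and "lead_coeff p * lead_coeff q \<in> F"
  shows "deficit F (pcompose p q) \<ge> deficit F q"
proof (cases "deficit F q = 0")
  case True then show ?thesis by simp
next
  case False
  define d where "d = deficit F q"
  define m where "m = degree q"
  define n where "n = degree p"
  have dpos: "d > 0" using False d_def by simp
  have dm: "d \<le> m" using deficit_le d_def m_def by metis
  have F0: "0 \<in> F" using assms(1) by (simp add: is_subfield_def)
  have top: "coeff q k \<in> F" if "k > m - d" for k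
  proof (cases "\<forall>k. coeff q k \<in> F")
    case True then show ?thesis by blast
  next
    case nF: False
    let ?S = "{k. k \<le> degree q \<and> coeff q k \<notin> F}"
    have dd: "d = m - Max ?S" using nF d_def m_def unfolding deficit_def by (simp only: if_not_P if_False)
    show ?thesis
    proof (cases "k \<le> m")
      case True
      have fin: "finite ?S" by simp
      have "k \<notin> ?S"
      proof
        assume "k \<in> ?S"
        then have "k \<le> Max ?S" using fin by simp
        then show False using that dd True dpos by linarith
      qed
      then show ?thesis using True m_def by auto
    next
      case False then show ?thesis using F0 m_def by (simp add: coeff_eq_0)
    qed
  qed
  have bm: "lead_coeff q \<in> F" using top dpos dm m_def by simp
  have an: "lead_coeff p \<in> F"
  proof -
    have "inverse (lead_coeff q) \<in> F" using bm assms(1,4) by (simp add: is_subfield_def)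
    then have "lead_coeff p * lead_coeff q * inverse (lead_coeff q) \<in> F"
      using assms(1,5) by (simp add: is_subfield_def)
    moreover have "lead_coeff p * lead_coeff q * inverse (lead_coeff q) = lead_coeff p"
      using assms(4) by (simp add: field_simps)
    ultimately show ?thesis by simp
  qed
  define r where "r = poly_cutoff (m - d + 1) q"
  define h where "h = q - r"
  have ch: "coeff h k = (if k < m - d + 1 then 0 else coeff q k)" for k
    by (simp add: h_def r_def coeff_poly_cutoff)
  have hF: "inF F h" unfolding inF_def ch using top F0 by auto
  have hq: "h + r = q" by (simp add: h_def)
  have degr: "degree r \<le> m - d"
    by (rule degree_le) (simp add: r_def coeff_poly_cutoff)
  have degh: "degree h \<le> m"
    by (rule degree_le) (simp add: ch m_def coeff_eq_0)
  have n1: "n \<ge> 1" using assms(3) n_def by simp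
  have "m \<le> n * m" using n1 by simp
  obtain n' where n': "n = Suc n'" using n1 by (cases n) auto
  define X where "X = q ^ n - h ^ n"
  have degX: "degree X + d \<le> n * m"
    using pow_diff_deg[of h r m d n'] hq degh degr dm m_def unfolding X_def n' by simp
  define p' where "p' = p - monom (lead_coeff p) n"
  have degp': "degree p' \<le> n - 1"
    by (rule degree_le) (auto simp: p'_def coeff_monom n_def coeff_eq_0)
  have pq: "pcompose p q = smult (lead_coeff p) (q ^ n) + pcompose p' q"
  proof -
    have "p = monom (lead_coeff p) n + p'" by (simp add: p'_def)
    then have "pcompose p q = pcompose (monom (lead_coeff p) n) q + pcompose p' q"
      by (metis pcompose_add)
    also have "pcompose (monom (lead_coeff p) n) q = smult (lead_coeff p) (q ^ n)"
      by (simp add: monom_altdef pcompose_smult pcompose_power' pcompose_pCons)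
    finally show ?thesis .
  qed
  define E where "E = smult (lead_coeff p) X + pcompose p' q"
  have pq2: "pcompose p q = smult (lead_coeff p) (h ^ n) + E"
    unfolding pq E_def X_def by (simp add: algebra_simps smult_diff_right)
  have degE1: "degree (smult (lead_coeff p) X) + d \<le> n * m"
    using degX degree_smult_le[of "lead_coeff p" X] by linarith
  have "degree (pcompose p' q) \<le> (n - 1) * m"
    using degree_pcompose_le[of p' q] mult_le_mono1[OF degp', of m] unfolding m_def by linarith
  then have degE2: "degree (pcompose p' q) + d \<le> n * m"
    using dm n' by (simp add: algebra_simps)
  have degE: "degree E + d \<le> n * m"
    using degree_add_le[of "smult (lead_coeff p) X" "n*m - d" "pcompose p' q"] degE1 degE2
    unfolding E_def by linarith
  have hnF: "inF F (smult (lead_coeff p) (h ^ n))"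
    using inF_power[OF assms(1) hF, of n] an assms(1)
    by (simp add: inF_def is_subfield_def)
  have topc: "coeff (pcompose p q) k \<in> F" if "k > n * m - d" for k
  proof -
    have "coeff E k = 0" using degE that by (intro coeff_eq_0) linarith
    then show ?thesis using hnF unfolding pq2 inF_def by simp
  qed
  have degpq: "degree (pcompose p q) = n * m"
    using degree_pcompose[of p q] n_def m_def by simp
  show ?thesis
  proof (cases "\<forall>k. coeff (pcompose p q) k \<in> F")
    case True
    then have "deficit F (pcompose p q) = n * m" using degpq by (simp add: deficit_def)
    moreover have "d \<le> n * m" using dm n1 \<open>m \<le> n * m\<close> by linarith
    ultimately show ?thesis unfolding d_def by linarith
  next
    case nF: False
    let ?S = "{k. k \<le> degree (pcompose p q) \<and> coeff (pcompose p q) k \<notin> F}"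
    have "\<forall>k\<in>?S. k \<le> n * m - d" using topc not_le by blast
    moreover have "?S \<noteq> {}"
    proof -
      obtain k where k: "coeff (pcompose p q) k \<notin> F" using nF by blast
      then have "k \<le> degree (pcompose p q)" using F0 le_degree[of "pcompose p q" k] by (cases "coeff (pcompose p q) k = 0") auto
      then show ?thesis using k by blast
    qed
    ultimately have "Max ?S \<le> n * m - d" by simp
    moreover have "d \<le> n * m" using dm n1 \<open>m \<le> n * m\<close> by linarith
    moreover have "deficit F (pcompose p q) = n * m - Max ?S"
      using nF degpq unfolding deficit_def by (simp only: if_False if_not_P)
    ultimately show ?thesis unfolding d_def by linarith
  qed
qed

end
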